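(* Fix $\gamma\in(0,1)$ and set $\alpha^{\oplus}=\sqrt{\frac{1+\sqrt{1-\gamma}}{2\pi^2}}$, $\alpha^{\ominus}=\sqrt{\frac{1-\sqrt{1-\gamma}}{2\pi^2}}$. For $\varepsilon>0$ let $\Lambda=\Lambda_\varepsilon=\{k\in\mathbb{N}:\lceil\alpha^{\ominus}/\varepsilon\rceil\le k\le\lfloor\alpha^{\oplus}/\varepsilon\rfloor\}$, let $(c_k)_{k\in\Lambda}$ be independent standard normal random variables, and define the random function $f:[0,1]\to\mathbb{R}$ by $f(x)=\sum_{k\in\Lambda}c_k\sqrt{2}\cos(k\pi x)$. Then for arbitrary constants $p>1$ and $0<\eta<2$ there exists a constant $C>0$, independent of $\varepsilon$, such that $$\mathbb{E}\|f\|_{L^\infty(0,1)}^p\le C\Big(\sum_{k\in\Lambda}k^\eta\Big)^{p/2}+C\,|\Lambda|^{p/2}.$$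
   Context: $|\Lambda|$ denotes the cardinality of $\Lambda$. The functions $\sqrt2\cos(k\pi x)$ are orthonormal in $L^2(0,1)$. *)

theory Defs
  imports "HOL-Probability.Probability"
begin

definition alpha_plus :: "real \<Rightarrow> real" where
  "alpha_plus \<gamma> = sqrt ((1 + sqrt (1 - \<gamma>)) / (2 * pi\<^sup>2))"

definition alpha_minus :: "real \<Rightarrow> real" where
  "alpha_minus \<gamma> = sqrt ((1 - sqrt (1 - \<gamma>)) / (2 * pi\<^sup>2))"

definition Lambda :: "real \<Rightarrow> real \<Rightarrow> nat set" where
  "Lambda \<gamma> \<epsilon> = {k::nat. \<lceil>alpha_minus \<gamma> / \<epsilon>\<rceil> \<le> int k \<and> int k \<le> \<lfloor>alpha_plus \<gamma> / \<epsilon>\<rfloor>}"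

definition rand_f :: "nat set \<Rightarrow> (nat \<Rightarrow> real) \<Rightarrow> real \<Rightarrow> real" where
  "rand_f \<Lambda> c x = (\<Sum>k\<in>\<Lambda>. c k * sqrt 2 * cos (real k * pi * x))"

text \<open>Sup norm on [0,1] (equals the L-infinity norm for continuous functions).\<close>
definition sup_norm01 :: "(real \<Rightarrow> real) \<Rightarrow> real" where
  "sup_norm01 g = (SUP x\<in>{0..1}. \<bar>g x\<bar>)"

end

theory Submission
  imports Defs
begin


lemma cos_lip: "\<bar>cos (x::real) - cos y\<bar> \<le> \<bar>x - y\<bar>"
proof -
  have "\<bar>cos x - cos y\<bar> = 2 * \<bar>sin ((x + y) / 2)\<bar> * \<bar>sin ((y - x) / 2)\<bar>"
    by (simp add: cos_diff_cos abs_mult)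
  also have "\<dots> \<le> 2 * 1 * \<bar>(y - x) / 2\<bar>"
    by (intro mult_mono abs_sin_x_le_abs_x abs_sin_le_one) auto
  finally show ?thesis by simp
qed

lemma split_pow:
  fixes t l p :: real and q :: nat
  assumes "t \<ge> 0" "l > 0" "p > 0" "p \<le> q"
  shows "t powr p \<le> l powr p + l powr (p - q) * t ^ q"
proof (cases "t \<le> l")
  case True
  then have "t powr p \<le> l powr p" using assms by (intro powr_mono2) auto
  moreover have "0 \<le> l powr (p - q) * t ^ q" using assms by auto
  ultimately show ?thesis by linarith
next
  case False
  then have tp: "t > 0" "t > l" using assms by auto
  have "t powr p = t powr (p - q) * t powr q" using tp by (simp add: powr_add[symmetric])
  also have "t powr q = t ^ q" using tp by (simp add: powr_realpow)
  also have "t powr (p - q) \<le> l powr (p - q)"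
    using tp assms by (intro powr_mono2') auto
  then have "t powr (p - q) * t ^ q \<le> l powr (p - q) * t ^ q" using tp by (intro mult_right_mono) auto
  finally show ?thesis using assms by (smt (verit) powr_ge_zero)
qed

lemma sum_pow_le:
  fixes x :: "nat \<Rightarrow> real"
  assumes "finite I" "\<And>i. i \<in> I \<Longrightarrow> x i \<ge> 0" "q > 0"
  shows "(\<Sum>i\<in>I. x i) ^ q \<le> real (card I) ^ q * (\<Sum>i\<in>I. x i ^ q)"
proof (cases "I = {}")
  case True then show ?thesis using assms(3) by (cases q) auto
next
  case False
  define mx where "mx = Max (x ` I)"
  have mxI: "mx \<in> x ` I" unfolding mx_def using assms False by (intro Max_in) auto
  have le: "x i \<le> mx" if "i \<in> I" for i unfolding mx_def using assms that by auto
  have "(\<Sum>i\<in>I. x i) \<le> (\<Sum>i\<in>I. mx)" using le by (intro sum_mono) auto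
  then have "(\<Sum>i\<in>I. x i) ^ q \<le> (real (card I) * mx) ^ q"
    using assms by (intro power_mono) (auto intro: sum_nonneg)
  also have "\<dots> = real (card I) ^ q * mx ^ q" by (simp add: power_mult_distrib)
  also have "mx ^ q \<le> (\<Sum>i\<in>I. x i ^ q)"
    using mxI assms by (auto intro!: member_le_sum[where f="\<lambda>i. x i ^ q"] zero_le_power)
  then have "real (card I) ^ q * mx ^ q \<le> real (card I) ^ q * (\<Sum>i\<in>I. x i ^ q)"
    by (intro mult_left_mono) auto
  finally show ?thesis .
qed

lemma add_powr:
  fixes A B p :: real
  assumes "A \<ge> 0" "B \<ge> 0" "p > 0"
  shows "(A + B) powr p \<le> 2 powr p * (A powr p + B powr p)"
proof -
  have "(A + B) powr p \<le> (2 * max A B) powr p" using assms by (intro powr_mono2) auto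
  also have "\<dots> = 2 powr p * (max A B) powr p" using assms by (simp add: powr_mult)
  also have "(max A B) powr p \<le> A powr p + B powr p" by (cases "A \<le> B") (auto simp: max_def)
  then have "2 powr p * (max A B) powr p \<le> 2 powr p * (A powr p + B powr p)" by (intro mult_left_mono) auto
  finally show ?thesis .
qed

lemma sup_bound:
  fixes c :: "nat \<Rightarrow> real" and K :: real and N :: nat
  assumes fin: "finite L" and Kb: "\<And>k. k \<in> L \<Longrightarrow> real k \<le> K" and N: "N > 0"
  shows "sup_norm01 (rand_f L c) \<le> Max ((\<lambda>j. \<bar>rand_f L c (real j / N)\<bar>) ` {0..N})
           + sqrt 2 * pi * K / N * (\<Sum>k\<in>L. \<bar>c k\<bar>)"
    and "sup_norm01 (rand_f L c) \<ge> 0"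
proof -
  define A where "A = Max ((\<lambda>j. \<bar>rand_f L c (real j / N)\<bar>) ` {0..N})"
  define B where "B = sqrt 2 * pi * K / N * (\<Sum>k\<in>L. \<bar>c k\<bar>)"
  have pt: "\<bar>rand_f L c x\<bar> \<le> A + B" if x: "x \<in> {0..1}" for x
  proof -
    define j where "j = nat \<lfloor>x * N\<rfloor>"
    have xN: "0 \<le> x * N" "x * N \<le> N" using x by (auto intro: mult_left_le_one_le)
    have jr: "real j = of_int \<lfloor>x * N\<rfloor>" unfolding j_def using xN by simp
    have j0: "real j \<le> x * N" "x * N < real j + 1" unfolding jr by linarith+
    have "real j \<le> real N" using j0 xN by linarith
    then have jN: "j \<in> {0..N}" by simp
    have dx: "\<bar>x - real j / N\<bar> \<le> 1 / N"
    proof -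
      have e: "x - real j / N = (x*N - real j)/N" using N by (simp add: field_simps)
      have "\<bar>x*N - real j\<bar> \<le> 1" using j0 by linarith
      then show ?thesis unfolding e using N by (simp add: divide_right_mono)
    qed
    have "\<bar>rand_f L c x - rand_f L c (real j / N)\<bar>
        = \<bar>\<Sum>k\<in>L. c k * sqrt 2 * (cos (real k * pi * x) - cos (real k * pi * (real j / N)))\<bar>"
      unfolding rand_f_def by (simp add: sum_subtractf[symmetric] algebra_simps)
    also have "\<dots> \<le> (\<Sum>k\<in>L. \<bar>c k * sqrt 2 * (cos (real k * pi * x) - cos (real k * pi * (real j / N)))\<bar>)"
      by (rule sum_abs)
    also have "\<dots> \<le> (\<Sum>k\<in>L. \<bar>c k\<bar> * (sqrt 2 * pi * K / N))"
    proof (intro sum_mono)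
      fix k assume k: "k \<in> L"
      have "\<bar>cos (real k * pi * x) - cos (real k * pi * (real j / N))\<bar> \<le> \<bar>real k * pi * x - real k * pi * (real j / N)\<bar>"
        by (rule cos_lip)
      also have "\<dots> = \<bar>real k * pi * (x - real j / N)\<bar>" by (simp add: right_diff_distrib)
      also have "\<dots> = real k * pi * \<bar>x - real j / N\<bar>" by (simp add: abs_mult)
      also have "\<dots> \<le> K * pi * (1 / N)" using Kb[OF k] dx by (intro mult_mono) auto
      finally have "\<bar>cos (real k * pi * x) - cos (real k * pi * (real j / N))\<bar> \<le> K * pi * (1 / N)" .
      then have "\<bar>c k\<bar> * sqrt 2 * \<bar>cos (real k * pi * x) - cos (real k * pi * (real j / N))\<bar> \<le> \<bar>c k\<bar> * sqrt 2 * (K * pi * (1 / N))"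
        by (intro mult_left_mono) auto
      then show "\<bar>c k * sqrt 2 * (cos (real k * pi * x) - cos (real k * pi * (real j / N)))\<bar> \<le> \<bar>c k\<bar> * (sqrt 2 * pi * K / N)"
        by (simp add: abs_mult mult_ac)
    qed
    also have "\<dots> = B" unfolding B_def by (simp add: sum_distrib_right[symmetric] mult.commute)
      (simp add: sum_divide_distrib[symmetric] sum_distrib_right[symmetric])
    finally have 1: "\<bar>rand_f L c x - rand_f L c (real j / N)\<bar> \<le> B" .
    have 2: "\<bar>rand_f L c (real j / N)\<bar> \<le> A" unfolding A_def using jN by (intro Max_ge) auto
    show ?thesis using 1 2 by linarith
  qed
  have bdd: "bdd_above ((\<lambda>x. \<bar>rand_f L c x\<bar>) ` {0..1})" using pt by (intro bdd_aboveI2) auto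
  show "sup_norm01 (rand_f L c) \<le> A + B" unfolding sup_norm01_def using pt by (intro cSUP_least) auto
  have "\<bar>rand_f L c 0\<bar> \<le> sup_norm01 (rand_f L c)" unfolding sup_norm01_def
    using bdd by (intro cSUP_upper) auto
  then show "sup_norm01 (rand_f L c) \<ge> 0" by linarith
qed

lemma gauss_moment:
  fixes M :: "'a measure" and c :: "nat \<Rightarrow> 'a \<Rightarrow> real" and a :: "nat \<Rightarrow> real"
  assumes P: "prob_space M" and fin: "finite L"
    and ind: "prob_space.indep_vars M (\<lambda>_. borel) c L"
    and nd: "\<forall>k\<in>L. distributed M lborel (c k) std_normal_density"
    and r: "r > 0"
  shows "(\<integral>\<^sup>+ \<omega>. ennreal (\<bar>\<Sum>k\<in>L. a k * c k \<omega>\<bar> ^ (2*r)) \<partial>M)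
          \<le> ennreal (fact (2*r) / (2^r * fact r) * (\<Sum>k\<in>L. (a k)\<^sup>2) ^ r)"
proof -
  interpret prob_space M by fact
  define I where "I = {k\<in>L. a k \<noteq> 0}"
  have sumI: "\<And>\<omega>. (\<Sum>k\<in>L. a k * c k \<omega>) = (\<Sum>k\<in>I. a k * c k \<omega>)"
    unfolding I_def using fin by (intro sum.mono_neutral_right) auto
  have sumI2: "(\<Sum>k\<in>L. (a k)\<^sup>2) = (\<Sum>k\<in>I. (a k)\<^sup>2)"
    unfolding I_def using fin by (intro sum.mono_neutral_right) auto
  have finI: "finite I" using fin I_def by auto
  show ?thesis
  proof (cases "I = {}")
    case True
    then show ?thesis using r by (simp add: sumI zero_power)
  next
    case False
    define s where "s = sqrt (\<Sum>k\<in>I. (a k)\<^sup>2)"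
    have spos: "s > 0" unfolding s_def using False finI
      by (intro real_sqrt_gt_zero sum_pos) (auto simp: I_def)
    have indI: "indep_vars (\<lambda>_. borel) (\<lambda>k \<omega>. a k * c k \<omega>) I"
    proof -
      have "indep_vars (\<lambda>_. borel) c I" using ind by (rule indep_vars_subset) (auto simp: I_def)
      then have "indep_vars (\<lambda>_. borel) (\<lambda>k. (\<lambda>x. a k * x) \<circ> c k) I"
        by (rule indep_vars_compose) auto
      then show ?thesis by (simp add: o_def)
    qed
    have dk: "distributed M lborel (\<lambda>\<omega>. a k * c k \<omega>) (normal_density 0 \<bar>a k\<bar>)" if "k \<in> I" for k
    proof -
      have "distributed M lborel (\<lambda>\<omega>. 0 + a k * c k \<omega>) (normal_density (0 + a k * 0) (\<bar>a k\<bar> * 1))"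
        using that nd by (intro normal_density_affine) (auto simp: I_def)
      then show ?thesis by simp
    qed
    have D: "distributed M lborel (\<lambda>\<omega>. \<Sum>k\<in>I. a k * c k \<omega>) (normal_density 0 s)"
      using sum_indep_normal[OF finI False indI, of "\<lambda>k. \<bar>a k\<bar>" "\<lambda>_. 0"] dk
      by (auto simp: s_def I_def)
    have "(\<integral>\<^sup>+ \<omega>. ennreal (\<bar>\<Sum>k\<in>L. a k * c k \<omega>\<bar> ^ (2*r)) \<partial>M)
        = (\<integral>\<^sup>+ \<omega>. ennreal ((\<Sum>k\<in>I. a k * c k \<omega>) ^ (2*r)) \<partial>M)"
      by (simp add: sumI power_even_abs)
    also have "\<dots> = (\<integral>\<^sup>+ x. ennreal (normal_density 0 s x) * ennreal (x ^ (2*r)) \<partial>lborel)"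
      by (rule distributed_nn_integral[OF D, symmetric]) auto
    also have "\<dots> = (\<integral>\<^sup>+ x. ennreal (normal_density 0 s x * (x - 0) ^ (2*r)) \<partial>lborel)"
      by (intro nn_integral_cong) (simp add: ennreal_mult' zero_le_even_power)
    also have "\<dots> = ennreal (fact (2 * r) / ((2 / s\<^sup>2)^r * fact r))"
      using normal_moment_even[OF spos, of 0 r]
      by (intro nn_integral_eq_integral[THEN trans]) 
         (auto simp: has_bochner_integral_iff zero_le_even_power intro!: mult_nonneg_nonneg)
    also have "fact (2 * r) / ((2 / s\<^sup>2)^r * fact r) = fact (2*r) / (2^r * fact r) * (\<Sum>k\<in>L. (a k)\<^sup>2) ^ r"
    proof -
      have s2: "s\<^sup>2 = (\<Sum>k\<in>I. (a k)\<^sup>2)" unfolding s_def by (simp add: sum_nonneg)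
      show ?thesis using spos by (simp add: sumI2 s2[symmetric] power_divide field_simps)
    qed
    finally show ?thesis by simp
  qed
qed

lemma lin_int:
  fixes U V :: "'a \<Rightarrow> real"
  assumes P: "prob_space M" and m: "U \<in> borel_measurable M" "V \<in> borel_measurable M"
    and nn: "\<And>x. U x \<ge> 0" "\<And>x. V x \<ge> 0" and co: "\<alpha> \<ge> 0" "\<beta> \<ge> 0" "\<delta> \<ge> 0"
    and bU: "(\<integral>\<^sup>+x. ennreal (U x) \<partial>M) \<le> ennreal u"
    and bV: "(\<integral>\<^sup>+x. ennreal (V x) \<partial>M) \<le> ennreal v"
    and uv: "u \<ge> 0" "v \<ge> 0"
  shows "(\<integral>\<^sup>+x. ennreal (\<alpha> + \<beta> * U x + \<delta> * V x) \<partial>M) \<le> ennreal (\<alpha> + \<beta> * u + \<delta> * v)"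
proof -
  interpret prob_space M by fact
  have "(\<integral>\<^sup>+x. ennreal (\<alpha> + \<beta> * U x + \<delta> * V x) \<partial>M)
      = (\<integral>\<^sup>+x. ennreal \<alpha> + ennreal \<beta> * ennreal (U x) + ennreal \<delta> * ennreal (V x) \<partial>M)"
    using nn co by (intro nn_integral_cong) (simp add: ennreal_plus ennreal_mult)
  also have "\<dots> = (\<integral>\<^sup>+x. ennreal \<alpha> + ennreal \<beta> * ennreal (U x) \<partial>M) + (\<integral>\<^sup>+x. ennreal \<delta> * ennreal (V x) \<partial>M)"
    using m by (intro nn_integral_add) auto
  also have "(\<integral>\<^sup>+x. ennreal \<alpha> + ennreal \<beta> * ennreal (U x) \<partial>M) = (\<integral>\<^sup>+x. ennreal \<alpha> \<partial>M) + (\<integral>\<^sup>+x. ennreal \<beta> * ennreal (U x) \<partial>M)"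
    using m by (intro nn_integral_add) auto
  also have "(\<integral>\<^sup>+x. ennreal \<alpha> \<partial>M) = ennreal \<alpha>" by (simp add: emeasure_space_1)
  also have "(\<integral>\<^sup>+x. ennreal \<beta> * ennreal (U x) \<partial>M) = ennreal \<beta> * (\<integral>\<^sup>+x. ennreal (U x) \<partial>M)"
    using m by (intro nn_integral_cmult) auto
  also have "(\<integral>\<^sup>+x. ennreal \<delta> * ennreal (V x) \<partial>M) = ennreal \<delta> * (\<integral>\<^sup>+x. ennreal (V x) \<partial>M)"
    using m by (intro nn_integral_cmult) auto
  also have "ennreal \<alpha> + ennreal \<beta> * (\<integral>\<^sup>+x. ennreal (U x) \<partial>M) + ennreal \<delta> * (\<integral>\<^sup>+x. ennreal (V x) \<partial>M)
      \<le> ennreal \<alpha> + ennreal \<beta> * ennreal u + ennreal \<delta> * ennreal v"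
    using bU bV by (intro add_mono mult_left_mono) auto
  also have "\<dots> = ennreal (\<alpha> + \<beta> * u + \<delta> * v)" using co uv by (simp add: ennreal_plus ennreal_mult)
  finally show ?thesis .
qed

lemma sum_int:
  fixes U :: "nat \<Rightarrow> 'a \<Rightarrow> real"
  assumes fin: "finite J" and m: "\<And>j. j \<in> J \<Longrightarrow> U j \<in> borel_measurable M"
    and nn: "\<And>j x. U j x \<ge> 0"
    and b: "\<And>j. j \<in> J \<Longrightarrow> (\<integral>\<^sup>+x. ennreal (U j x) \<partial>M) \<le> ennreal (u j)"
    and u: "\<And>j. u j \<ge> 0"
  shows "(\<integral>\<^sup>+x. ennreal (\<Sum>j\<in>J. U j x) \<partial>M) \<le> ennreal (\<Sum>j\<in>J. u j)"
proof -
  have "(\<integral>\<^sup>+x. ennreal (\<Sum>j\<in>J. U j x) \<partial>M) = (\<integral>\<^sup>+x. (\<Sum>j\<in>J. ennreal (U j x)) \<partial>M)"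
    using nn by (intro nn_integral_cong) (simp add: sum_ennreal)
  also have "\<dots> = (\<Sum>j\<in>J. \<integral>\<^sup>+x. ennreal (U j x) \<partial>M)"
    using m by (intro nn_integral_sum) auto
  also have "\<dots> \<le> (\<Sum>j\<in>J. ennreal (u j))" using b by (intro sum_mono) auto
  also have "\<dots> = ennreal (\<Sum>j\<in>J. u j)" using u by (simp add: sum_ennreal)
  finally show ?thesis .
qed

lemma core:
  fixes p \<eta> R :: real
  assumes p: "p > 1" and eta: "\<eta> > 0" and R: "R \<ge> 1"
  shows "\<exists>C>0. \<forall>(L::nat set) (m::nat) (M::'a measure) (c :: nat \<Rightarrow> 'a \<Rightarrow> real).
     finite L \<longrightarrow> L \<noteq> {} \<longrightarrow> m \<ge> 1 \<longrightarrow> (\<forall>k\<in>L. real k \<le> R * m) \<longrightarrow> real (card L) \<le> R * m \<longrightarrow>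
     prob_space M \<longrightarrow> prob_space.indep_vars M (\<lambda>_. borel) c L \<longrightarrow>
     (\<forall>k\<in>L. distributed M lborel (c k) std_normal_density) \<longrightarrow>
     (\<integral>\<^sup>+ \<omega>. ennreal ((sup_norm01 (rand_f L (\<lambda>k. c k \<omega>))) powr p) \<partial>M)
       \<le> ennreal (C * (real (card L) * real m powr \<eta>) powr (p / 2))"
proof -
  define r :: nat where "r = nat \<lceil>p/2 + 3/\<eta>\<rceil> + 1"
  have r0: "r > 0" unfolding r_def by simp
  have rb: "p/2 + 3/\<eta> \<le> real r"
  proof -
    have c1: "p/2 + 3/\<eta> \<le> of_int \<lceil>p/2 + 3/\<eta>\<rceil>" by (rule le_of_int_ceiling)
    have "of_int \<lceil>p/2 + 3/\<eta>\<rceil> \<le> real (nat \<lceil>p/2 + 3/\<eta>\<rceil>)" by linarith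
    moreover have "real r = real (nat \<lceil>p/2 + 3/\<eta>\<rceil>) + 1" unfolding r_def by simp
    ultimately show ?thesis using c1 by linarith
  qed
  have e3: "3/\<eta> > 0" using eta by simp
  have rp: "p \<le> real (2*r)" using rb e3 p by linarith
  have reta: "3 \<le> \<eta> * real r"
  proof -
    have "3/\<eta> \<le> real r" using rb p by linarith
    then show ?thesis using eta by (simp add: field_simps)
  qed
  define q where "q = 2*r"
  define \<mu> :: real where "\<mu> = fact (2*r) / (2^r * fact r)"
  have \<mu>0: "\<mu> > 0" unfolding \<mu>_def by simp
  define C where "C = 2 powr p * (2 + 2*\<mu>*2^r + (sqrt 2*pi*R^2)^q * R * \<mu>)"
  have C0: "C > 0" unfolding C_def using \<mu>0 R by (intro mult_pos_pos add_pos_nonneg) auto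
  show ?thesis
  proof (intro exI[of _ C] conjI C0 allI impI)
    fix L :: "nat set" and m :: nat and M :: "'a measure" and c :: "nat \<Rightarrow> 'a \<Rightarrow> real"
    assume fin: "finite L" and ne: "L \<noteq> {}" and m1: "m \<ge> 1" and Kb: "\<forall>k\<in>L. real k \<le> R * m"
      and nle: "real (card L) \<le> R * m" and P: "prob_space M"
      and ind: "prob_space.indep_vars M (\<lambda>_. borel) c L"
      and nd: "\<forall>k\<in>L. distributed M lborel (c k) std_normal_density"
    interpret prob_space M by fact
    define n where "n = card L"
    have n1: "real n \<ge> 1" unfolding n_def using fin ne by (simp add: Suc_le_eq card_gt_0_iff)
    have mr: "real m \<ge> 1" using m1 by simp
    define N :: nat where "N = m^3"
    have N0: "N > 0" unfolding N_def using m1 by simp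
    define K where "K = R * m"
    define W where "W = sqrt 2 * pi * K / N"
    have W0: "W \<ge> 0" unfolding W_def K_def using R by auto
    define lam where "lam = sqrt (real n * real m powr \<eta>)"
    have mpe: "1 \<le> real m powr \<eta>" using mr eta by (simp add: ge_one_powr_ge_zero)
    have nm1: "real n * real m powr \<eta> \<ge> 1" using mult_mono[OF n1 mpe] by simp
    have lam0: "lam > 0" unfolding lam_def using nm1 by simp
    define X where "X = (real n * real m powr \<eta>) powr (p/2)"
    have lamX: "lam powr p = X" unfolding lam_def X_def using nm1
      by (simp add: powr_half_sqrt[symmetric] powr_powr)
    have X1: "X \<ge> 1" unfolding X_def using nm1 p by (simp add: ge_one_powr_ge_zero)
    define a where "a = (\<lambda>j k. sqrt 2 * cos (real k * pi * (real j / real N)))"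
    define U where "U = (\<lambda>\<omega>. \<Sum>j\<in>{0..N}. \<bar>\<Sum>k\<in>L. a j k * c k \<omega>\<bar> ^ q)"
    define V where "V = (\<lambda>\<omega>. \<Sum>k\<in>L. \<bar>c k \<omega>\<bar> ^ q)"
    have cm: "c k \<in> borel_measurable M" if "k \<in> L" for k
      using nd that distributed_measurable by fastforce
    have linm: "(\<lambda>\<omega>. \<Sum>k\<in>L. b k * c k \<omega>) \<in> borel_measurable M" for b
      using cm by (intro borel_measurable_sum borel_measurable_times) auto
    have Ujm: "(\<lambda>\<omega>. \<bar>\<Sum>k\<in>L. a j k * c k \<omega>\<bar> ^ q) \<in> borel_measurable M" for j
      by (intro borel_measurable_power borel_measurable_abs linm)
    have Um: "U \<in> borel_measurable M" unfolding U_def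
      using Ujm by (intro borel_measurable_sum) auto
    have Vm: "V \<in> borel_measurable M" unfolding V_def
      using cm by (intro borel_measurable_sum borel_measurable_power borel_measurable_abs) auto
    have pw: "(sup_norm01 (rand_f L (\<lambda>k. c k \<omega>))) powr p \<le>
        2 powr p * (lam powr p + 1) + 2 powr p * lam powr (p - q) * U \<omega> + 2 powr p * (W^q * real n ^ q) * V \<omega>" for \<omega>
    proof -
      define cw where "cw = (\<lambda>k. c k \<omega>)"
      define A where "A = Max ((\<lambda>j. \<bar>rand_f L cw (real j / N)\<bar>) ` {0..N})"
      define B where "B = W * (\<Sum>k\<in>L. \<bar>cw k\<bar>)"
      have SB: "sup_norm01 (rand_f L cw) \<le> A + B" "sup_norm01 (rand_f L cw) \<ge> 0"
        using sup_bound[OF fin _ N0, of K cw] Kb unfolding A_def B_def W_def K_def by auto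
      have Ain: "A \<in> (\<lambda>j. \<bar>rand_f L cw (real j / N)\<bar>) ` {0..N}" unfolding A_def by (intro Max_in) auto
      then obtain j0 where j0: "j0 \<in> {0..N}" "A = \<bar>rand_f L cw (real j0 / N)\<bar>" by auto
      have A0: "A \<ge> 0" using j0 by simp
      have B0: "B \<ge> 0" unfolding B_def using W0 by (auto intro: sum_nonneg)
      have rf: "rand_f L cw (real j / N) = (\<Sum>k\<in>L. a j k * c k \<omega>)" for j
        unfolding rand_f_def a_def cw_def by (simp add: mult_ac)
      have AU: "A ^ q \<le> U \<omega>" unfolding U_def j0(2) rf
        using j0(1) by (intro member_le_sum[where f="\<lambda>j. \<bar>\<Sum>k\<in>L. a j k * c k \<omega>\<bar> ^ q"]) auto
      have BV: "B ^ q \<le> W^q * real n ^ q * V \<omega>"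
      proof -
        have "B ^ q = W ^ q * (\<Sum>k\<in>L. \<bar>cw k\<bar>) ^ q" unfolding B_def by (simp add: power_mult_distrib)
        also have "(\<Sum>k\<in>L. \<bar>cw k\<bar>) ^ q \<le> real n ^ q * V \<omega>"
          unfolding V_def n_def cw_def using fin r0 q_def by (intro sum_pow_le) auto
        then have "W ^ q * (\<Sum>k\<in>L. \<bar>cw k\<bar>) ^ q \<le> W ^ q * (real n ^ q * V \<omega>)"
          using W0 by (intro mult_left_mono) auto
        finally show ?thesis by (simp add: mult.assoc)
      qed
      have qp: "p \<le> real q" using rp q_def by simp
      have "(sup_norm01 (rand_f L cw)) powr p \<le> (A + B) powr p" using SB p by (intro powr_mono2) auto
      also have "\<dots> \<le> 2 powr p * (A powr p + B powr p)" using A0 B0 p by (intro add_powr) auto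
      also have "A powr p \<le> lam powr p + lam powr (p - q) * A ^ q"
        using A0 lam0 p qp by (intro split_pow) auto
      also have "\<dots> \<le> lam powr p + lam powr (p - q) * U \<omega>" using AU by (intro add_left_mono mult_left_mono) auto
      also have "B powr p \<le> 1 powr p + 1 powr (p - q) * B ^ q"
        using B0 p qp by (intro split_pow) auto
      also have "\<dots> \<le> 1 + W^q * real n ^ q * V \<omega>" using BV by simp
      finally have "(sup_norm01 (rand_f L cw)) powr p \<le>
          2 powr p * (lam powr p + lam powr (p - q) * U \<omega> + (1 + W^q * real n ^ q * V \<omega>))"
        by (simp add: mult_left_mono)
      then show ?thesis unfolding cw_def by (simp add: algebra_simps)
    qed
    have sq0: "0 \<le> \<mu> * (\<Sum>k\<in>L. (a j k)\<^sup>2) ^ r" for j using \<mu>0 by (simp add: sum_nonneg)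
    have EU: "(\<integral>\<^sup>+\<omega>. ennreal (U \<omega>) \<partial>M) \<le> ennreal (\<Sum>j\<in>{0..N}. \<mu> * (\<Sum>k\<in>L. (a j k)\<^sup>2) ^ r)"
      unfolding U_def
    proof (rule sum_int)
      fix j show "(\<integral>\<^sup>+x. ennreal (\<bar>\<Sum>k\<in>L. a j k * c k x\<bar> ^ q) \<partial>M) \<le> ennreal (\<mu> * (\<Sum>k\<in>L. (a j k)\<^sup>2) ^ r)"
        unfolding q_def \<mu>_def using gauss_moment[OF P fin ind nd r0, of "a j"] by simp
    qed (use Ujm sq0 fin in auto)
    have EV: "(\<integral>\<^sup>+\<omega>. ennreal (V \<omega>) \<partial>M) \<le> ennreal (\<Sum>k\<in>L. \<mu>)"
      unfolding V_def
    proof (rule sum_int)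
      fix k assume k: "k \<in> L"
      have e1: "(\<Sum>i\<in>L. (if i = k then 1 else 0) * c i x) = c k x" for x
        using k fin by (subst sum.remove[of L k]) auto
      have e2: "(\<Sum>i\<in>L. (if i = k then 1 else 0 :: real)\<^sup>2) = 1"
        using k fin by (subst sum.remove[of L k]) auto
      show "(\<integral>\<^sup>+x. ennreal (\<bar>c k x\<bar> ^ q) \<partial>M) \<le> ennreal \<mu>"
        using gauss_moment[OF P fin ind nd r0, of "\<lambda>i. if i = k then 1 else 0"]
        unfolding q_def \<mu>_def e1 e2 by simp
    qed (use cm \<mu>0 fin in auto)
    have "(\<integral>\<^sup>+ \<omega>. ennreal ((sup_norm01 (rand_f L (\<lambda>k. c k \<omega>))) powr p) \<partial>M)
       \<le> (\<integral>\<^sup>+ \<omega>. ennreal (2 powr p * (lam powr p + 1) + 2 powr p * lam powr (p - q) * U \<omega> + 2 powr p * (W^q * real n ^ q) * V \<omega>) \<partial>M)"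
      using pw by (intro nn_integral_mono) (simp add: ennreal_leI)
    also have "\<dots> \<le> ennreal (2 powr p * (lam powr p + 1) + 2 powr p * lam powr (p - q) * (\<Sum>j\<in>{0..N}. \<mu> * (\<Sum>k\<in>L. (a j k)\<^sup>2) ^ r)
         + 2 powr p * (W^q * real n ^ q) * (\<Sum>k\<in>L. \<mu>))"
      using EU EV Um Vm W0 \<mu>0 sq0 unfolding U_def V_def
      by (intro lin_int[OF P]) (auto intro!: sum_nonneg)
    also have "\<dots> \<le> ennreal (C * X)"
    proof (intro ennreal_leI)
      have t1: "lam powr p + 1 \<le> 2 * X" using lamX X1 by simp
      have sa: "(\<Sum>k\<in>L. (a j k)\<^sup>2) \<le> 2 * real n" for j
      proof -
        have "(\<Sum>k\<in>L. (a j k)\<^sup>2) \<le> (\<Sum>k\<in>L. 2)"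
          unfolding a_def by (intro sum_mono) (simp add: power_mult_distrib cos_squared_eq)
        then show ?thesis by (simp add: n_def)
      qed
      have sU: "(\<Sum>j\<in>{0..N}. \<mu> * (\<Sum>k\<in>L. (a j k)\<^sup>2) ^ r) \<le> (real N + 1) * (\<mu> * (2 * real n) ^ r)"
      proof -
        have "(\<Sum>j\<in>{0..N}. \<mu> * (\<Sum>k\<in>L. (a j k)\<^sup>2) ^ r) \<le> (\<Sum>j\<in>{0..N}. \<mu> * (2 * real n) ^ r)"
          using \<mu>0 sa by (intro sum_mono mult_left_mono power_mono) (auto intro: sum_nonneg)
        then show ?thesis by (simp add: add.commute)
      qed
      have lq: "lam ^ q = (real n * real m powr \<eta>) ^ r" unfolding lam_def q_def using nm1
        by (simp add: power_mult)
      have lpq: "lam powr (p - q) = X / (real n * real m powr \<eta>) ^ r"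
        using lam0 lamX lq by (simp add: powr_diff powr_realpow)
      have mpow: "(real m powr \<eta>) ^ r = real m powr (\<eta> * r)"
      proof -
        have "real m powr \<eta> > 0" using mr by simp
        then have "(real m powr \<eta>) ^ r = (real m powr \<eta>) powr (real r)" by (simp add: powr_realpow)
        then show ?thesis by (simp add: powr_powr)
      qed
      have m3: "real m ^ 3 \<le> real m powr (\<eta> * r)"
      proof -
        have "real m ^ 3 = real m powr 3" using mr by (simp add: powr_realpow)
        also have "\<dots> \<le> real m powr (\<eta> * r)" using mr reta by (intro powr_mono) auto
        finally show ?thesis .
      qed
      have m31: "1 \<le> real m ^ 3" using mr by simp
      have t2: "lam powr (p - q) * ((real N + 1) * (\<mu> * (2 * real n) ^ r)) \<le> 2 * \<mu> * 2^r * X"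
      proof -
        have "lam powr (p - q) * ((real N + 1) * (\<mu> * (2 * real n) ^ r))
           = X * \<mu> * 2^r * ((real m ^ 3 + 1) / real m powr (\<eta> * r))"
          unfolding lpq N_def using n1 mr
          by (simp add: power_mult_distrib mpow[symmetric] field_simps)
        also have "(real m ^ 3 + 1) / real m powr (\<eta> * r) \<le> 2"
          using m3 m31 by (simp add: divide_le_eq)
        then have "X * \<mu> * 2^r * ((real m ^ 3 + 1) / real m powr (\<eta> * r)) \<le> X * \<mu> * 2^r * 2"
          using X1 \<mu>0 by (intro mult_left_mono) auto
        finally show ?thesis by (simp add: mult_ac)
      qed
      have t3: "W^q * real n ^ q * (\<Sum>k\<in>L. \<mu>) \<le> (sqrt 2*pi*R^2)^q * R * \<mu> * X"
      proof -
        have Wn: "W * real n \<le> sqrt 2*pi*R^2 / real m"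
        proof -
          have "W * real n \<le> W * (R * m)" using nle W0 by (intro mult_left_mono) (auto simp: n_def)
          also have "\<dots> = sqrt 2*pi*R^2 / real m" unfolding W_def K_def N_def using mr
            by (simp add: power2_eq_square power3_eq_cube field_simps)
          finally show ?thesis .
        qed
        have "W^q * real n ^ q * (\<Sum>k\<in>L. \<mu>) = (W * real n)^q * real n * \<mu>"
          by (simp add: n_def power_mult_distrib)
        also have "\<dots> \<le> (sqrt 2*pi*R^2 / real m)^q * (R * m) * \<mu>"
          using Wn W0 nle \<mu>0 n1 by (intro mult_right_mono mult_mono power_mono) (auto simp: n_def)
        also have "\<dots> = (sqrt 2*pi*R^2)^q * R * \<mu> * (real m / real m ^ q)"
          by (simp add: power_divide field_simps)
        also have "real m / real m ^ q \<le> 1"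
        proof -
          have "real m ^ 1 \<le> real m ^ q" using mr r0 q_def by (intro power_increasing) auto
          then show ?thesis using mr by simp
        qed
        then have "(sqrt 2*pi*R^2)^q * R * \<mu> * (real m / real m ^ q) \<le> (sqrt 2*pi*R^2)^q * R * \<mu> * X"
          using X1 R \<mu>0 by (intro mult_left_mono) auto
        finally show ?thesis .
      qed
      have "2 powr p * (lam powr p + 1) + 2 powr p * lam powr (p - q) * (\<Sum>j\<in>{0..N}. \<mu> * (\<Sum>k\<in>L. (a j k)\<^sup>2) ^ r)
         + 2 powr p * (W^q * real n ^ q) * (\<Sum>k\<in>L. \<mu>)
         \<le> 2 powr p * (2 * X) + 2 powr p * (2 * \<mu> * 2^r * X) + 2 powr p * ((sqrt 2*pi*R^2)^q * R * \<mu> * X)"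
      proof -
        have "lam powr (p - q) * (\<Sum>j\<in>{0..N}. \<mu> * (\<Sum>k\<in>L. (a j k)\<^sup>2) ^ r) \<le> lam powr (p - q) * ((real N + 1) * (\<mu> * (2 * real n) ^ r))"
          using sU by (intro mult_left_mono) auto
        then show ?thesis using t1 t2 t3
          by (smt (verit, ccfv_SIG) mult.assoc mult_left_mono powr_ge_zero)
      qed
      also have "\<dots> = C * X" unfolding C_def by (simp add: algebra_simps)
      finally show "2 powr p * (lam powr p + 1) + 2 powr p * lam powr (p - q) * (\<Sum>j\<in>{0..N}. \<mu> * (\<Sum>k\<in>L. (a j k)\<^sup>2) ^ r)
         + 2 powr p * (W^q * real n ^ q) * (\<Sum>k\<in>L. \<mu>) \<le> C * X" .
    qed
    finally show "(\<integral>\<^sup>+ \<omega>. ennreal ((sup_norm01 (rand_f L (\<lambda>k. c k \<omega>))) powr p) \<partial>M)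
       \<le> ennreal (C * (real (card L) * real m powr \<eta>) powr (p / 2))"
      unfolding X_def n_def .
  qed
qed

lemma sup_norm_zero: "sup_norm01 (rand_f {} c) = 0"
  unfolding sup_norm01_def rand_f_def by simp

theorem theorem2p4:
  fixes \<gamma> p \<eta> :: real
  assumes "0 < \<gamma>" "\<gamma> < 1" "p > 1" "0 < \<eta>" "\<eta> < 2"
  shows "\<exists>C>0. \<forall>\<epsilon>>0. \<forall>(M :: 'a measure) (c :: nat \<Rightarrow> 'a \<Rightarrow> real).
           prob_space M \<longrightarrow>
           prob_space.indep_vars M (\<lambda>_. borel) c (Lambda \<gamma> \<epsilon>) \<longrightarrow>
           (\<forall>k\<in>Lambda \<gamma> \<epsilon>. distributed M lborel (c k) std_normal_density) \<longrightarrow>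
           (\<integral>\<^sup>+ \<omega>. ennreal ((sup_norm01 (rand_f (Lambda \<gamma> \<epsilon>) (\<lambda>k. c k \<omega>))) powr p) \<partial>M)
             \<le> ennreal (C * (\<Sum>k\<in>Lambda \<gamma> \<epsilon>. real k powr \<eta>) powr (p / 2)
                        + C * real (card (Lambda \<gamma> \<epsilon>)) powr (p / 2))"
proof -
  define a where "a = alpha_minus \<gamma>"
  define b where "b = alpha_plus \<gamma>"
  have s1: "sqrt (1 - \<gamma>) < 1" using assms by simp
  have s0: "sqrt (1 - \<gamma>) \<ge> 0" using assms by simp
  have a0: "a > 0" unfolding a_def alpha_minus_def using s1 by (simp add: divide_pos_pos)
  have ab: "a \<le> b" unfolding a_def b_def alpha_minus_def alpha_plus_def using s0
    by (intro real_sqrt_le_mono divide_right_mono) auto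
  define R where "R = b / a"
  have R1: "R \<ge> 1" unfolding R_def using a0 ab by simp
  obtain C where C0: "C > 0" and HC: "\<forall>(L::nat set) (m::nat) (M::'a measure) (c :: nat \<Rightarrow> 'a \<Rightarrow> real).
     finite L \<longrightarrow> L \<noteq> {} \<longrightarrow> m \<ge> 1 \<longrightarrow> (\<forall>k\<in>L. real k \<le> R * m) \<longrightarrow> real (card L) \<le> R * m \<longrightarrow>
     prob_space M \<longrightarrow> prob_space.indep_vars M (\<lambda>_. borel) c L \<longrightarrow>
     (\<forall>k\<in>L. distributed M lborel (c k) std_normal_density) \<longrightarrow>
     (\<integral>\<^sup>+ \<omega>. ennreal ((sup_norm01 (rand_f L (\<lambda>k. c k \<omega>))) powr p) \<partial>M)
       \<le> ennreal (C * (real (card L) * real m powr \<eta>) powr (p / 2))"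
    using core[OF assms(3) assms(4) R1] by blast
  show ?thesis
  proof (intro exI[of _ C] conjI C0 allI impI)
    fix \<epsilon> :: real and M :: "'a measure" and c :: "nat \<Rightarrow> 'a \<Rightarrow> real"
    assume e: "\<epsilon> > 0" and P: "prob_space M" and ind: "prob_space.indep_vars M (\<lambda>_. borel) c (Lambda \<gamma> \<epsilon>)"
      and nd: "\<forall>k\<in>Lambda \<gamma> \<epsilon>. distributed M lborel (c k) std_normal_density"
    define L where "L = Lambda \<gamma> \<epsilon>"
    have rhs0: "0 \<le> C * (\<Sum>k\<in>L. real k powr \<eta>) powr (p / 2) + C * real (card L) powr (p / 2)"
      using C0 by simp
    have goalL: "(\<integral>\<^sup>+ \<omega>. ennreal ((sup_norm01 (rand_f L (\<lambda>k. c k \<omega>))) powr p) \<partial>M)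
             \<le> ennreal (C * (\<Sum>k\<in>L. real k powr \<eta>) powr (p / 2)
                        + C * real (card L) powr (p / 2))"
    proof (cases "L = {}")
      case True
      then show ?thesis by (simp add: sup_norm_zero)
    next
      case False
      have memL: "k \<in> L \<longleftrightarrow> \<lceil>a / \<epsilon>\<rceil> \<le> int k \<and> int k \<le> \<lfloor>b / \<epsilon>\<rfloor>" for k
        unfolding L_def Lambda_def a_def b_def by simp
      have Lsub: "L \<subseteq> {1..nat \<lfloor>b / \<epsilon>\<rfloor>}"
      proof
        fix k assume k: "k \<in> L"
        have "0 < a / \<epsilon>" using a0 e by simp
        then have c1: "1 \<le> \<lceil>a / \<epsilon>\<rceil>" by (simp add: le_ceiling_iff) 
        have c2: "\<lceil>a / \<epsilon>\<rceil> \<le> int k" "int k \<le> \<lfloor>b / \<epsilon>\<rfloor>" using k memL by auto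
        have "1 \<le> k" using c1 c2 by linarith
        moreover have "k \<le> nat \<lfloor>b / \<epsilon>\<rfloor>" using c2 by linarith
        ultimately show "k \<in> {1..nat \<lfloor>b / \<epsilon>\<rfloor>}" by simp
      qed
      have fin: "finite L" using Lsub finite_subset by blast
      define m where "m = Min L"
      have mL: "m \<in> L" unfolding m_def using fin False by (rule Min_in)
      have mle: "m \<le> k" if "k \<in> L" for k unfolding m_def using fin that by simp
      have m1: "m \<ge> 1" using mL Lsub by auto
      have ma: "a / \<epsilon> \<le> real m"
      proof -
        have "\<lceil>a / \<epsilon>\<rceil> \<le> int m" using mL memL by auto
        then show ?thesis by (simp add: ceiling_le_iff)
      qed
      have bR: "b / \<epsilon> \<le> R * m"
      proof -
        have "b / \<epsilon> = R * (a / \<epsilon>)" unfolding R_def using a0 by simp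
        also have "\<dots> \<le> R * m" using ma R1 by (intro mult_left_mono) auto
        finally show ?thesis .
      qed
      have kb: "\<forall>k\<in>L. real k \<le> R * m"
      proof
        fix k assume "k \<in> L"
        then have "int k \<le> \<lfloor>b / \<epsilon>\<rfloor>" using memL by auto
        then have "real k \<le> b / \<epsilon>" by (simp add: le_floor_iff)
        then show "real k \<le> R * m" using bR by linarith
      qed
      have cb: "real (card L) \<le> R * m"
      proof -
        have "card L \<le> card {1..nat \<lfloor>b / \<epsilon>\<rfloor>}" using Lsub by (intro card_mono) auto
        then have "real (card L) \<le> real (nat \<lfloor>b / \<epsilon>\<rfloor>)" by simp
        also have "\<dots> \<le> b / \<epsilon>" using a0 ab e by (simp add: of_nat_nat)
        finally show ?thesis using bR by linarith
      qed
      have main: "(\<integral>\<^sup>+ \<omega>. ennreal ((sup_norm01 (rand_f L (\<lambda>k. c k \<omega>))) powr p) \<partial>M)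
         \<le> ennreal (C * (real (card L) * real m powr \<eta>) powr (p / 2))"
        using HC fin False m1 kb cb P ind nd unfolding L_def by blast
      have sm: "real (card L) * real m powr \<eta> \<le> (\<Sum>k\<in>L. real k powr \<eta>)"
      proof -
        have "(\<Sum>k\<in>L. real m powr \<eta>) \<le> (\<Sum>k\<in>L. real k powr \<eta>)"
          using mle m1 assms(4) by (intro sum_mono powr_mono2) auto
        then show ?thesis by simp
      qed
      have "C * (real (card L) * real m powr \<eta>) powr (p / 2) \<le> C * (\<Sum>k\<in>L. real k powr \<eta>) powr (p / 2)"
        using sm C0 assms(3) by (intro mult_left_mono powr_mono2) auto
      also have "\<dots> \<le> C * (\<Sum>k\<in>L. real k powr \<eta>) powr (p / 2) + C * real (card L) powr (p / 2)"
        using C0 by simp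
      finally show ?thesis using main by (meson ennreal_leI order_trans)
    qed
    then show "(\<integral>\<^sup>+ \<omega>. ennreal ((sup_norm01 (rand_f (Lambda \<gamma> \<epsilon>) (\<lambda>k. c k \<omega>))) powr p) \<partial>M)
             \<le> ennreal (C * (\<Sum>k\<in>Lambda \<gamma> \<epsilon>. real k powr \<eta>) powr (p / 2)
                        + C * real (card (Lambda \<gamma> \<epsilon>)) powr (p / 2))" unfolding L_def .
  qed
qed

end
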